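(* Let $m<n$ be natural numbers and let $(A;R)\in\mathcal C$. Suppose there is $C\subseteq A$ with $C\le A$, $|C|=n$, $d(C)=n-1$, and every $(n-1)$-element subset of $C$ independent in $PG(A;R)$. Then for every $(B;R')\in\mathcal C_m$, the pregeometry $PG(A;R)$ is not isomorphic to $PG(B;R')$.
   Context: A set system is a pair $(A;R)$ where $R$ is a set of finite non-empty subsets of $A$; for $X\subseteq A$, $R[X]=\{r\in R:r\subseteq X\}$ and $\delta(X)=|X|-|R[X]|$. $\mathcal C$ is the class of finite set systems with $\delta(X)\ge0$ for all $X\subseteq A$, and $\mathcal C_m$ is the class of members of $\mathcal C$ all of whose sets in $R$ have size at most $m$. $X\le A$ means $\delta(X)\le\delta(X')$ for all $X\subseteq X'\subseteq A$. $d(X)=\min\{\delta(Y):X\subseteq Y\subseteq A\}$, $\mathrm{cl}(X)=\{y:d(X\cup\{y\})=d(X)\}$, and $PG(A;R)$ is the pregeometry $(A,\mathrm{cl})$ with rank function $d$. *)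

theory Defs
  imports Main
begin

definition set_system :: "'a set \<Rightarrow> 'a set set \<Rightarrow> bool" where
  "set_system A R \<longleftrightarrow> (\<forall>r\<in>R. finite r \<and> r \<noteq> {} \<and> r \<subseteq> A)"

definition Rsub :: "'a set set \<Rightarrow> 'a set \<Rightarrow> 'a set set" where
  "Rsub R X = {r \<in> R. r \<subseteq> X}"

definition delta :: "'a set set \<Rightarrow> 'a set \<Rightarrow> int" where
  "delta R X = int (card X) - int (card (Rsub R X))"

definition classC :: "'a set \<Rightarrow> 'a set set \<Rightarrow> bool" where
  "classC A R \<longleftrightarrow> finite A \<and> set_system A R \<and> (\<forall>X. X \<subseteq> A \<longrightarrow> delta R X \<ge> 0)"

definition classCm :: "nat \<Rightarrow> 'a set \<Rightarrow> 'a set set \<Rightarrow> bool" where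
  "classCm m A R \<longleftrightarrow> classC A R \<and> (\<forall>r\<in>R. card r \<le> m)"

definition selfsuff :: "'a set \<Rightarrow> 'a set set \<Rightarrow> 'a set \<Rightarrow> bool" where
  "selfsuff A R X \<longleftrightarrow> X \<subseteq> A \<and> (\<forall>X'. X \<subseteq> X' \<and> X' \<subseteq> A \<longrightarrow> delta R X \<le> delta R X')"

definition dim :: "'a set \<Rightarrow> 'a set set \<Rightarrow> 'a set \<Rightarrow> int" where
  "dim A R X = Min {delta R Y | Y. X \<subseteq> Y \<and> Y \<subseteq> A}"

definition pg_cl :: "'a set \<Rightarrow> 'a set set \<Rightarrow> 'a set \<Rightarrow> 'a set" where
  "pg_cl A R X = {y \<in> A. dim A R (X \<union> {y}) = dim A R X}"

definition pg_indep :: "'a set \<Rightarrow> 'a set set \<Rightarrow> 'a set \<Rightarrow> bool" where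
  "pg_indep A R X \<longleftrightarrow> X \<subseteq> A \<and> (\<forall>x\<in>X. x \<notin> pg_cl A R (X - {x}))"

definition pg_iso :: "'a set \<Rightarrow> 'a set set \<Rightarrow> 'b set \<Rightarrow> 'b set set \<Rightarrow> bool" where
  "pg_iso A R B R' \<longleftrightarrow> (\<exists>f. bij_betw f A B \<and>
      (\<forall>X. X \<subseteq> A \<longrightarrow> f ` (pg_cl A R X) = pg_cl B R' (f ` X)))"

end

theory Submission
  imports Defs
begin

lemma classC_finite: "classC A R \<Longrightarrow> finite A"
  by (simp add: classC_def)

lemma classC_finR: "classC A R \<Longrightarrow> finite R"
proof -
  assume c: "classC A R"
  have "R \<subseteq> Pow A" using c unfolding classC_def set_system_def by auto
  thus ?thesis using c unfolding classC_def by (meson finite_Pow_iff finite_subset)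
qed

lemma classC_nonneg: "classC A R \<Longrightarrow> X \<subseteq> A \<Longrightarrow> delta R X \<ge> 0"
  by (simp add: classC_def)

lemma finite_Rsub: "finite R \<Longrightarrow> finite (Rsub R X)"
  by (simp add: Rsub_def)

lemma Rsub_mono: "X \<subseteq> Y \<Longrightarrow> Rsub R X \<subseteq> Rsub R Y"
  unfolding Rsub_def by auto

lemma dim_set_fin: "finite A \<Longrightarrow> finite {delta R Y | Y. X \<subseteq> Y \<and> Y \<subseteq> A}"
proof -
  assume f: "finite A"
  have "{delta R Y | Y. X \<subseteq> Y \<and> Y \<subseteq> A} \<subseteq> delta R ` Pow A" by auto
  thus ?thesis using f by (meson finite_Pow_iff finite_imageI finite_subset)
qed

lemma dim_le: "finite A \<Longrightarrow> X \<subseteq> Y \<Longrightarrow> Y \<subseteq> A \<Longrightarrow> dim A R X \<le> delta R Y"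
  unfolding dim_def by (rule Min_le) (auto simp: dim_set_fin)

lemma dim_attained: "finite A \<Longrightarrow> X \<subseteq> A \<Longrightarrow> \<exists>Y. X \<subseteq> Y \<and> Y \<subseteq> A \<and> delta R Y = dim A R X"
proof -
  assume f: "finite A" and x: "X \<subseteq> A"
  have "dim A R X \<in> {delta R Y | Y. X \<subseteq> Y \<and> Y \<subseteq> A}"
    unfolding dim_def by (rule Min_in) (use f x dim_set_fin in auto)
  thus ?thesis by auto
qed

lemma dim_mono: "finite A \<Longrightarrow> X \<subseteq> X' \<Longrightarrow> X' \<subseteq> A \<Longrightarrow> dim A R X \<le> dim A R X'"
  by (metis dim_attained dim_le order_trans)

lemma delta_insert: "finite R \<Longrightarrow> finite W \<Longrightarrow> delta R (insert y W) \<le> delta R W + 1"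
proof -
  assume fR: "finite R" and fW: "finite W"
  have "card (insert y W) \<le> card W + 1" by (simp add: fW card_insert_if)
  moreover have "card (Rsub R W) \<le> card (Rsub R (insert y W))"
    by (rule card_mono) (auto simp: fR finite_Rsub Rsub_def)
  ultimately show ?thesis unfolding delta_def by linarith
qed

lemma dim_insert_le: "classC A R \<Longrightarrow> X \<subseteq> A \<Longrightarrow> y \<in> A \<Longrightarrow> dim A R (insert y X) \<le> dim A R X + 1"
proof -
  assume c: "classC A R" and x: "X \<subseteq> A" and y: "y \<in> A"
  obtain W where W: "X \<subseteq> W" "W \<subseteq> A" "delta R W = dim A R X"
    using dim_attained[OF classC_finite[OF c] x] by blast
  have "dim A R (insert y X) \<le> delta R (insert y W)"
    using W y classC_finite[OF c] by (intro dim_le) auto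
  also have "\<dots> \<le> delta R W + 1"
  proof (rule delta_insert[OF classC_finR[OF c]])
    show "finite W" using W(2) classC_finite[OF c] by (rule finite_subset)
  qed
  finally show ?thesis using W by simp
qed

lemma dim_empty: "classC A R \<Longrightarrow> dim A R {} = 0"
proof -
  assume c: "classC A R"
  obtain Y where Y: "{} \<subseteq> Y" "Y \<subseteq> A" "delta R Y = dim A R {}"
    using dim_attained[OF classC_finite[OF c], of "{}" R] by auto
  have "delta R Y \<ge> 0" using classC_nonneg[OF c Y(2)] .
  moreover have "dim A R {} \<le> delta R {}" by (rule dim_le[OF classC_finite[OF c]]) simp_all
  moreover have "delta R {} \<le> 0" unfolding delta_def by simp
  ultimately show ?thesis using Y by linarith
qed

lemma dim_insert: "classC A R \<Longrightarrow> X \<subseteq> A \<Longrightarrow> y \<in> A \<Longrightarrow>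
  dim A R (insert y X) = dim A R X + (if y \<in> pg_cl A R X then 0 else 1)"
proof -
  assume c: "classC A R" and x: "X \<subseteq> A" and y: "y \<in> A"
  have a: "dim A R X \<le> dim A R (insert y X)"
    by (rule dim_mono[OF classC_finite[OF c]]) (use x y in auto)
  have b: "dim A R (insert y X) \<le> dim A R X + 1" using dim_insert_le[OF c x y] .
  show ?thesis
  proof (cases "y \<in> pg_cl A R X")
    case True
    hence "dim A R (X \<union> {y}) = dim A R X" unfolding pg_cl_def by simp
    thus ?thesis using True by simp
  next
    case False
    hence "dim A R (X \<union> {y}) \<noteq> dim A R X" using y unfolding pg_cl_def by simp
    hence "dim A R (insert y X) \<noteq> dim A R X" by simp
    thus ?thesis using False a b by simp
  qed
qed

lemma delta_submod: "finite R \<Longrightarrow> finite X \<Longrightarrow> finite Y \<Longrightarrow>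
  delta R (X \<union> Y) + delta R (X \<inter> Y) \<le> delta R X + delta R Y"
proof -
  assume fR: "finite R" and fX: "finite X" and fY: "finite Y"
  have e1: "card X + card Y = card (X \<union> Y) + card (X \<inter> Y)" using card_Un_Int fX fY by blast
  have e2: "card (Rsub R X) + card (Rsub R Y) = card (Rsub R X \<union> Rsub R Y) + card (Rsub R X \<inter> Rsub R Y)"
    using card_Un_Int finite_Rsub fR by blast
  have e3: "Rsub R X \<inter> Rsub R Y = Rsub R (X \<inter> Y)" unfolding Rsub_def by auto
  have e4: "card (Rsub R X \<union> Rsub R Y) \<le> card (Rsub R (X \<union> Y))"
    by (rule card_mono) (auto simp: fR finite_Rsub Rsub_def)
  have i1: "int (card X) + int (card Y) = int (card (X \<union> Y)) + int (card (X \<inter> Y))"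
    using e1 by (metis of_nat_add)
  have i2: "int (card (Rsub R X)) + int (card (Rsub R Y)) = int (card (Rsub R X \<union> Rsub R Y)) + int (card (Rsub R (X \<inter> Y)))"
    using e2 e3 by (metis of_nat_add)
  have i4: "int (card (Rsub R X \<union> Rsub R Y)) \<le> int (card (Rsub R (X \<union> Y)))" using e4 by simp
  show ?thesis using i1 i2 i4 unfolding delta_def by linarith
qed

lemma delta_mono_R: "Q1 \<subseteq> Q2 \<Longrightarrow> finite Q2 \<Longrightarrow> delta Q2 X \<le> delta Q1 X"
proof -
  assume s: "Q1 \<subseteq> Q2" and f: "finite Q2"
  have "card (Rsub Q1 X) \<le> card (Rsub Q2 X)"
    by (rule card_mono) (use s f in \<open>auto simp: finite_Rsub Rsub_def\<close>)
  thus ?thesis unfolding delta_def by linarith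
qed

lemma opt_sub_cl: "classC A R \<Longrightarrow> X \<subseteq> W \<Longrightarrow> W \<subseteq> A \<Longrightarrow> delta R W = dim A R X \<Longrightarrow> W \<subseteq> pg_cl A R X"
proof
  fix w assume c: "classC A R" and xw: "X \<subseteq> W" and wa: "W \<subseteq> A" and d: "delta R W = dim A R X" and w: "w \<in> W"
  have "dim A R (X \<union> {w}) \<le> delta R W" using dim_le[OF classC_finite[OF c]] xw wa w by auto
  moreover have "dim A R X \<le> dim A R (X \<union> {w})" by (rule dim_mono[OF classC_finite[OF c]]) (use xw wa w in auto)
  ultimately show "w \<in> pg_cl A R X" unfolding pg_cl_def using d w wa by auto
qed

lemma opt_union: "classC A R \<Longrightarrow> X \<subseteq> W1 \<Longrightarrow> W1 \<subseteq> A \<Longrightarrow> delta R W1 = dim A R X \<Longrightarrow>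
   X \<subseteq> W2 \<Longrightarrow> W2 \<subseteq> A \<Longrightarrow> delta R W2 = dim A R X \<Longrightarrow> delta R (W1 \<union> W2) = dim A R X"
proof -
  assume c: "classC A R" and a: "X \<subseteq> W1" "W1 \<subseteq> A" "delta R W1 = dim A R X"
     "X \<subseteq> W2" "W2 \<subseteq> A" "delta R W2 = dim A R X"
  have fA: "finite A" using classC_finite[OF c] .
  have "delta R (W1 \<union> W2) + delta R (W1 \<inter> W2) \<le> delta R W1 + delta R W2"
    using delta_submod[OF classC_finR[OF c] finite_subset[OF a(2) fA] finite_subset[OF a(5) fA]] .
  moreover have "dim A R X \<le> delta R (W1 \<inter> W2)" by (rule dim_le[OF fA]) (use a in auto)
  moreover have "dim A R X \<le> delta R (W1 \<union> W2)" by (rule dim_le[OF fA]) (use a in auto)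
  ultimately show ?thesis using a by linarith
qed

lemma cl_opt: "classC A R \<Longrightarrow> X \<subseteq> A \<Longrightarrow> delta R (pg_cl A R X) = dim A R X"
proof -
  assume c: "classC A R" and x: "X \<subseteq> A"
  have fA: "finite A" using classC_finite[OF c] .
  define Opt where "Opt = {W. X \<subseteq> W \<and> W \<subseteq> A \<and> delta R W = dim A R X}"
  have fO: "finite Opt"
  proof (rule finite_subset[of _ "Pow A"])
    show "Opt \<subseteq> Pow A" unfolding Opt_def by auto
  qed (simp add: fA)
  have neO: "Opt \<noteq> {}" using dim_attained[OF fA x] unfolding Opt_def by blast
  have "Max (card ` Opt) \<in> card ` Opt" using fO neO by simp
  then obtain W0 where W0: "W0 \<in> Opt" "card W0 = Max (card ` Opt)" by auto
  have mx: "\<And>W. W \<in> Opt \<Longrightarrow> card W \<le> card W0" using W0(2) fO by simp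
  have "W0 \<subseteq> pg_cl A R X" using opt_sub_cl[OF c] W0(1) unfolding Opt_def by blast
  moreover have "pg_cl A R X \<subseteq> W0"
  proof
    fix y assume y: "y \<in> pg_cl A R X"
    hence yA: "y \<in> A" and dy: "dim A R (X \<union> {y}) = dim A R X" unfolding pg_cl_def by auto
    obtain Wy where Wy: "X \<union> {y} \<subseteq> Wy" "Wy \<subseteq> A" "delta R Wy = dim A R (X \<union> {y})"
      using dim_attained[OF fA] x yA by (metis Un_insert_right insert_subset sup_bot.right_neutral)
    have "W0 \<union> Wy \<in> Opt" using opt_union[OF c] W0(1) Wy dy unfolding Opt_def by auto
    hence "card (W0 \<union> Wy) \<le> card W0" using mx by blast
    moreover have "finite (W0 \<union> Wy)"
    proof (rule finite_subset[OF _ fA])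
      show "W0 \<union> Wy \<subseteq> A" using W0(1) Wy unfolding Opt_def by auto
    qed
    ultimately have "W0 = W0 \<union> Wy" by (metis card_seteq sup_ge1)
    thus "y \<in> W0" using Wy by auto
  qed
  ultimately show ?thesis using W0(1) unfolding Opt_def by auto
qed

lemma sub_cl: "X \<subseteq> A \<Longrightarrow> X \<subseteq> pg_cl A R X"
  unfolding pg_cl_def by (auto simp: insert_absorb)

lemma cl_sub: "pg_cl A R X \<subseteq> A"
  unfolding pg_cl_def by auto

lemma cl_mono: "classC A R \<Longrightarrow> X \<subseteq> Y \<Longrightarrow> Y \<subseteq> A \<Longrightarrow> pg_cl A R X \<subseteq> pg_cl A R Y"
proof -
  assume c: "classC A R" and xy: "X \<subseteq> Y" and ya: "Y \<subseteq> A"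
  have fA: "finite A" using classC_finite[OF c] .
  define P where "P = pg_cl A R X"
  define P' where "P' = pg_cl A R Y"
  have PA: "P \<subseteq> A" "P' \<subseteq> A" unfolding P_def P'_def by (auto simp: cl_sub)
  have XP: "X \<subseteq> P" "Y \<subseteq> P'" unfolding P_def P'_def using sub_cl[of X A R] sub_cl[of Y A R] xy ya by auto
  have "delta R (P \<union> P') + delta R (P \<inter> P') \<le> delta R P + delta R P'"
    using delta_submod[OF classC_finR[OF c] finite_subset[OF PA(1) fA] finite_subset[OF PA(2) fA]] .
  moreover have "delta R P = dim A R X" unfolding P_def using cl_opt[OF c] xy ya by auto
  moreover have "delta R P' = dim A R Y" unfolding P'_def using cl_opt[OF c] ya by auto
  moreover have "dim A R X \<le> delta R (P \<inter> P')" by (rule dim_le[OF fA]) (use XP PA xy in auto)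
  moreover have "dim A R Y \<le> delta R (P \<union> P')" by (rule dim_le[OF fA]) (use XP PA in auto)
  ultimately have "delta R (P \<union> P') = dim A R Y" by linarith
  hence "P \<union> P' \<subseteq> pg_cl A R Y" using opt_sub_cl[OF c, of Y "P \<union> P'"] XP PA by auto
  thus ?thesis unfolding P_def by auto
qed

lemma dim_cl: "classC A R \<Longrightarrow> X \<subseteq> A \<Longrightarrow> dim A R (pg_cl A R X) = dim A R X"
proof -
  assume c: "classC A R" and x: "X \<subseteq> A"
  have fA: "finite A" using classC_finite[OF c] .
  have "dim A R X \<le> dim A R (pg_cl A R X)" by (rule dim_mono[OF fA sub_cl[OF x] cl_sub])
  moreover have "dim A R (pg_cl A R X) \<le> delta R (pg_cl A R X)" by (rule dim_le[OF fA order_refl cl_sub])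
  ultimately show ?thesis using cl_opt[OF c x] by linarith
qed

lemma cl_idem: "classC A R \<Longrightarrow> X \<subseteq> A \<Longrightarrow> pg_cl A R (pg_cl A R X) = pg_cl A R X"
proof
  assume c: "classC A R" and x: "X \<subseteq> A"
  show "pg_cl A R X \<subseteq> pg_cl A R (pg_cl A R X)" by (rule sub_cl[OF cl_sub])
  have "X \<subseteq> pg_cl A R (pg_cl A R X)" using sub_cl[OF x] sub_cl[OF cl_sub, of A R X] by (rule subset_trans)
  moreover have "delta R (pg_cl A R (pg_cl A R X)) = dim A R X"
    using cl_opt[OF c cl_sub] dim_cl[OF c x] by simp
  ultimately show "pg_cl A R (pg_cl A R X) \<subseteq> pg_cl A R X"
    using opt_sub_cl[OF c _ cl_sub] by blast
qed

lemma flat_card: "classC A R \<Longrightarrow> F \<subseteq> A \<Longrightarrow> pg_cl A R F = F \<Longrightarrow>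
   int (card (Rsub R F)) = int (card F) - dim A R F"
  using cl_opt[of A R F] unfolding delta_def by simp

lemma indep_dim: "classC A R \<Longrightarrow> pg_indep A R D \<Longrightarrow> dim A R D = int (card D)"
proof -
  assume c: "classC A R" and ind: "pg_indep A R D"
  have DA: "D \<subseteq> A" using ind unfolding pg_indep_def by auto
  have fD: "finite D" using finite_subset[OF DA classC_finite[OF c]] .
  have "finite Z \<Longrightarrow> Z \<subseteq> D \<Longrightarrow> dim A R Z = int (card Z)" for Z
  proof (induction Z rule: finite_induct)
    case empty then show ?case using dim_empty[OF c] by simp
  next
    case (insert y Z)
    have yD: "y \<in> D" and ZD: "Z \<subseteq> D - {y}" using insert by auto
    have "pg_cl A R Z \<subseteq> pg_cl A R (D - {y})" using cl_mono[OF c ZD] DA by auto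
    moreover have "y \<notin> pg_cl A R (D - {y})" using ind yD unfolding pg_indep_def by auto
    ultimately have "y \<notin> pg_cl A R Z" by auto
    hence "dim A R (insert y Z) = dim A R Z + 1"
      using dim_insert[OF c, of Z y] ZD DA yD by auto
    thus ?case using insert by simp
  qed
  thus ?thesis using fD by simp
qed

lemma iso_dim:
  assumes cA: "classC A R" and cB: "classC B R'" and bij: "bij_betw f A B"
    and fcl: "\<forall>X. X \<subseteq> A \<longrightarrow> f ` pg_cl A R X = pg_cl B R' (f ` X)"
  shows "X \<subseteq> A \<Longrightarrow> dim B R' (f ` X) = dim A R X"
proof -
  have inj: "inj_on f A" and fA: "f ` A = B" using bij by (auto simp: bij_betw_def)
  have finA: "finite A" using classC_finite[OF cA] .
  have "finite X \<Longrightarrow> X \<subseteq> A \<Longrightarrow> dim B R' (f ` X) = dim A R X" for X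
  proof (induction X rule: finite_induct)
    case empty then show ?case using dim_empty[OF cA] dim_empty[OF cB] by simp
  next
    case (insert y X)
    have yA: "y \<in> A" and XA: "X \<subseteq> A" using insert by auto
    have fy: "f y \<in> B" and fX: "f ` X \<subseteq> B" using yA XA fA by auto
    have "(f y \<in> pg_cl B R' (f ` X)) = (y \<in> pg_cl A R X)"
      using fcl XA inj_on_image_mem_iff[OF inj yA cl_sub] by metis
    thus ?case using dim_insert[OF cA XA yA] dim_insert[OF cB fX fy] insert by simp
  qed
  thus "X \<subseteq> A \<Longrightarrow> dim B R' (f ` X) = dim A R X" using finite_subset[OF _ finA] by blast
qed

lemma union_count:
  assumes "finite I" "finite R1" "finite R2"
  shows "(\<forall>S. S \<subseteq> I \<longrightarrow> S \<noteq> {} \<longrightarrow> card (Rsub R1 (\<Inter> (F ` S))) = card (Rsub R2 (\<Inter> (G ` S)))) \<Longrightarrow>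
    card (\<Union>i\<in>I. Rsub R1 (F i)) = card (\<Union>i\<in>I. Rsub R2 (G i))"
  using assms(1)
proof (induction I arbitrary: F G rule: finite_induct)
  case empty then show ?case by simp
next
  case (insert j I)
  have h: "\<And>S. S \<subseteq> insert j I \<Longrightarrow> S \<noteq> {} \<Longrightarrow> card (Rsub R1 (\<Inter> (F ` S))) = card (Rsub R2 (\<Inter> (G ` S)))"
    using insert.prems by blast
  have U1: "card (\<Union>i\<in>I. Rsub R1 (F i)) = card (\<Union>i\<in>I. Rsub R2 (G i))"
    using insert.IH[of F G] h insert.hyps by blast
  have J: "card (Rsub R1 (F j)) = card (Rsub R2 (G j))" using h[of "{j}"] by simp
  have I2: "card (\<Union>i\<in>I. Rsub R1 (F j \<inter> F i)) = card (\<Union>i\<in>I. Rsub R2 (G j \<inter> G i))"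
  proof (rule insert.IH, intro allI impI)
    fix S assume S: "S \<subseteq> I" "S \<noteq> {}"
    have "\<Inter> ((\<lambda>i. F j \<inter> F i) ` S) = \<Inter> (F ` insert j S)" using S by auto
    moreover have "\<Inter> ((\<lambda>i. G j \<inter> G i) ` S) = \<Inter> (G ` insert j S)" using S by auto
    ultimately show "card (Rsub R1 (\<Inter> ((\<lambda>i. F j \<inter> F i) ` S))) = card (Rsub R2 (\<Inter> ((\<lambda>i. G j \<inter> G i) ` S)))"
      using h[of "insert j S"] S by auto
  qed
  have int1: "Rsub R1 (F j) \<inter> (\<Union>i\<in>I. Rsub R1 (F i)) = (\<Union>i\<in>I. Rsub R1 (F j \<inter> F i))"
    unfolding Rsub_def by auto
  have int2: "Rsub R2 (G j) \<inter> (\<Union>i\<in>I. Rsub R2 (G i)) = (\<Union>i\<in>I. Rsub R2 (G j \<inter> G i))"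
    unfolding Rsub_def by auto
  have f1: "finite (\<Union>i\<in>I. Rsub R1 (F i))" "finite (Rsub R1 (F j))"
    using insert.hyps assms finite_Rsub by auto
  have f2: "finite (\<Union>i\<in>I. Rsub R2 (G i))" "finite (Rsub R2 (G j))"
    using insert.hyps assms finite_Rsub by auto
  have c1: "card (Rsub R1 (F j)) + card (\<Union>i\<in>I. Rsub R1 (F i)) =
      card (Rsub R1 (F j) \<union> (\<Union>i\<in>I. Rsub R1 (F i))) + card (\<Union>i\<in>I. Rsub R1 (F j \<inter> F i))"
    using card_Un_Int[OF f1(2) f1(1)] int1 by simp
  have c2: "card (Rsub R2 (G j)) + card (\<Union>i\<in>I. Rsub R2 (G i)) =
      card (Rsub R2 (G j) \<union> (\<Union>i\<in>I. Rsub R2 (G i))) + card (\<Union>i\<in>I. Rsub R2 (G j \<inter> G i))"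
    using card_Un_Int[OF f2(2) f2(1)] int2 by simp
  show ?case using c1 c2 U1 J I2 by simp
qed

theorem mainTheorem11:
  fixes m n :: nat and A :: "'a set" and R :: "'a set set" and C :: "'a set"
  assumes "m < n"
    and "classC A R"
    and "C \<subseteq> A" and "selfsuff A R C" and "card C = n"
    and "dim A R C = int n - 1"
    and "\<forall>D. D \<subseteq> C \<and> card D = n - 1 \<longrightarrow> pg_indep A R D"
  shows "\<forall>(B :: 'b set) (R' :: 'b set set). classCm m B R' \<longrightarrow> \<not> pg_iso A R B R'"
proof (intro allI impI notI)
  fix B :: "'b set" and R' :: "'b set set"
  assume cm: "classCm m B R'" and iso: "pg_iso A R B R'"
  have cA: "classC A R" by (rule assms(2))
  have cB: "classC B R'" and sz: "\<forall>r\<in>R'. card r \<le> m" using cm unfolding classCm_def by auto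
  obtain f where bij: "bij_betw f A B"
    and fcl: "\<forall>X. X \<subseteq> A \<longrightarrow> f ` pg_cl A R X = pg_cl B R' (f ` X)"
    using iso unfolding pg_iso_def by blast
  have inj: "inj_on f A" and fA: "f ` A = B" using bij by (auto simp: bij_betw_def)
  have finA: "finite A" using classC_finite[OF cA] .
  have finB: "finite B" using classC_finite[OF cB] .
  have finR: "finite R" using classC_finR[OF cA] .
  have finR': "finite R'" using classC_finR[OF cB] .
  have CA: "C \<subseteq> A" by (rule assms(3))
  have finC: "finite C" using finite_subset[OF CA finA] .
  have n1: "n \<ge> 1" using assms(1) by simp
  have trans: "\<And>X. X \<subseteq> A \<Longrightarrow> dim B R' (f ` X) = dim A R X"
    using iso_dim[OF cA cB bij fcl] by blast
  have dimD: "\<And>c. c \<in> C \<Longrightarrow> dim A R (C - {c}) = int n - 1"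
  proof -
    fix c assume c: "c \<in> C"
    have "card (C - {c}) = n - 1" using c finC assms(5) by simp
    hence "pg_indep A R (C - {c})" using assms(7) by blast
    hence "dim A R (C - {c}) = int (card (C - {c}))" using indep_dim[OF cA] by blast
    thus "dim A R (C - {c}) = int n - 1" using \<open>card (C - {c}) = n - 1\<close> n1 by simp
  qed
  have dC: "delta R C = int n - 1"
  proof -
    obtain Y where Y: "C \<subseteq> Y" "Y \<subseteq> A" "delta R Y = dim A R C"
      using dim_attained[OF finA CA] by blast
    have "delta R C \<le> delta R Y" using assms(4) Y unfolding selfsuff_def by blast
    moreover have "dim A R C \<le> delta R C" by (rule dim_le[OF finA order_refl CA])
    ultimately show ?thesis using Y assms(6) by linarith
  qed
  hence cardRC: "card (Rsub R C) = 1" unfolding delta_def using assms(5) by simp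
  then obtain r0 where r0: "Rsub R C = {r0}" using card_1_singletonE by blast
  have r0R: "r0 \<in> R" "r0 \<subseteq> C" using r0 unfolding Rsub_def by auto
  have CR: "C \<in> R"
  proof (rule ccontr)
    assume "C \<notin> R"
    hence "r0 \<noteq> C" using r0R by auto
    then obtain c where c: "c \<in> C" "c \<notin> r0" using r0R by blast
    have "r0 \<in> Rsub R (C - {c})" using r0R c unfolding Rsub_def by auto
    hence "card (Rsub R (C - {c})) \<ge> 1"
      using finite_Rsub[OF finR] by (metis One_nat_def Suc_leI card_gt_0_iff empty_iff)
    moreover have "card (C - {c}) = n - 1" using c finC assms(5) by simp
    ultimately have "delta R (C - {c}) \<le> int n - 2" unfolding delta_def using n1 by simp
    moreover have "dim A R (C - {c}) \<le> delta R (C - {c})" by (rule dim_le[OF finA order_refl]) (use CA in auto)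
    ultimately show False using dimD[OF c(1)] by linarith
  qed
  define C' where "C' = f ` C"
  have C'B: "C' \<subseteq> B" unfolding C'_def using CA fA by auto
  have dC': "dim B R' C' = int n - 1" unfolding C'_def using trans[OF CA] assms(6) by simp
  obtain Y where Y: "C' \<subseteq> Y" "Y \<subseteq> B" "delta R' Y = dim B R' C'"
    using dim_attained[OF finB C'B] by blast
  define Q where "Q = Rsub R' Y"
  define F where "F = (\<lambda>r. pg_cl B R' r)"
  define Q' where "Q' = (\<Union>r\<in>Q. Rsub R' (F r))"
  define V where "V = Y \<union> \<Union>(F ` Q)"
  have QY: "\<And>r. r \<in> Q \<Longrightarrow> r \<subseteq> Y \<and> r \<in> R'" unfolding Q_def Rsub_def by auto
  have finQ: "finite Q" unfolding Q_def using finite_Rsub[OF finR'] .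
  have Q'R': "Q' \<subseteq> R'" unfolding Q'_def Rsub_def by auto
  have finQ': "finite Q'" using finite_subset[OF Q'R' finR'] .
  have FB: "\<And>r. F r \<subseteq> B" unfolding F_def by (rule cl_sub)
  have rF: "\<And>r. r \<in> Q \<Longrightarrow> r \<subseteq> F r" unfolding F_def by (rule sub_cl) (use QY Y(2) in auto)
  have VB: "V \<subseteq> B" unfolding V_def using Y(2) FB by auto
  have dimF: "\<And>r. r \<in> Q \<Longrightarrow> delta R' (F r) = dim B R' r"
    unfolding F_def by (rule cl_opt[OF cB]) (use QY Y(2) in auto)
  have RQ'F: "\<And>r. r \<in> Q \<Longrightarrow> Rsub Q' (F r) = Rsub R' (F r)"
    unfolding Q'_def Rsub_def by blast
  have chain: "J \<subseteq> Q \<Longrightarrow> delta Q' (Y \<union> \<Union>(F ` J)) \<le> int n - 1" if finJ: "finite J" for J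
    using finJ
  proof (induction J rule: finite_induct)
    case empty
    have "Rsub R' Y \<subseteq> Rsub Q' Y"
    proof
      fix r assume r: "r \<in> Rsub R' Y"
      hence "r \<in> Q" unfolding Q_def .
      hence "r \<in> Q'" unfolding Q'_def using rF QY unfolding Rsub_def by blast
      thus "r \<in> Rsub Q' Y" using r unfolding Rsub_def by auto
    qed
    hence "card (Rsub R' Y) \<le> card (Rsub Q' Y)" using finite_Rsub[OF finQ'] card_mono by blast
    hence "delta Q' Y \<le> delta R' Y" unfolding delta_def by simp
    thus ?case using Y(3) dC' by simp
  next
    case (insert r J)
    define X where "X = Y \<union> \<Union>(F ` J)"
    have rQ: "r \<in> Q" using insert by auto
    have XB: "X \<subseteq> B" unfolding X_def using Y(2) FB by auto
    have finX: "finite X" using finite_subset[OF XB finB] .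
    have finFr: "finite (F r)" using finite_subset[OF FB finB] .
    have eq: "Y \<union> \<Union>(F ` insert r J) = X \<union> F r" unfolding X_def by auto
    have sm: "delta Q' (X \<union> F r) + delta Q' (X \<inter> F r) \<le> delta Q' X + delta Q' (F r)"
      using delta_submod[OF finQ' finX finFr] .
    have e1: "delta Q' (F r) = dim B R' r" using RQ'F[OF rQ] dimF[OF rQ] unfolding delta_def by simp
    have e2: "delta R' (X \<inter> F r) \<le> delta Q' (X \<inter> F r)" using delta_mono_R[OF Q'R' finR'] .
    have e3: "dim B R' (X \<inter> F r) \<le> delta R' (X \<inter> F r)" by (rule dim_le[OF finB order_refl]) (use XB in auto)
    have e4: "dim B R' r \<le> dim B R' (X \<inter> F r)"
      by (rule dim_mono[OF finB]) (use QY[OF rQ] rF[OF rQ] XB in \<open>auto simp: X_def\<close>)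
    have "delta Q' X \<le> int n - 1" using insert unfolding X_def by auto
    hence "delta Q' (X \<union> F r) \<le> int n - 1" using sm e1 e2 e3 e4 by linarith
    thus ?case using eq by simp
  qed
  have keyB: "int (card V) - int (card Q') \<le> int n - 1"
  proof -
    have "Rsub Q' V = Q'" unfolding Q'_def V_def Rsub_def by auto
    thus ?thesis using chain[OF finQ] unfolding V_def delta_def by simp
  qed
  define pre where "pre = (\<lambda>S. {a \<in> A. f a \<in> S})"
  have preA: "\<And>S. pre S \<subseteq> A" unfolding pre_def by auto
  have fpre: "\<And>S. S \<subseteq> B \<Longrightarrow> f ` pre S = S" unfolding pre_def using fA by auto
  define G where "G = (\<lambda>r. pg_cl A R (pre r))"
  have GA: "\<And>r. G r \<subseteq> A" unfolding G_def by (rule cl_sub)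
  have fG: "\<And>r. r \<in> Q \<Longrightarrow> f ` G r = F r"
  proof -
    fix r assume r: "r \<in> Q"
    have rB: "r \<subseteq> B" using QY[OF r] Y(2) by auto
    have "f ` G r = pg_cl B R' (f ` pre r)" unfolding G_def using fcl preA by blast
    also have "\<dots> = F r" unfolding F_def using fpre[OF rB] by simp
    finally show "f ` G r = F r" .
  qed
  have Gflat: "\<And>r. pg_cl A R (G r) = G r" unfolding G_def using cl_idem[OF cA preA] .
  have cnt: "card (\<Union>r\<in>Q. Rsub R (G r)) = card Q'"
    unfolding Q'_def
  proof (rule union_count[OF finQ finR finR'], intro allI impI)
    fix S assume S: "S \<subseteq> Q" "S \<noteq> {}"
    define X where "X = \<Inter> (G ` S)"
    obtain j where j: "j \<in> S" using S by blast
    have XA: "X \<subseteq> A" unfolding X_def using GA j by blast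
    have Xflat: "pg_cl A R X = X"
    proof
      show "X \<subseteq> pg_cl A R X" using sub_cl[OF XA] .
      show "pg_cl A R X \<subseteq> X"
      proof
        fix x assume x: "x \<in> pg_cl A R X"
        { fix r assume r: "r \<in> S"
          have "X \<subseteq> G r" unfolding X_def using r by blast
          hence "pg_cl A R X \<subseteq> pg_cl A R (G r)" by (rule cl_mono[OF cA _ GA])
          hence "x \<in> G r" using x Gflat by auto }
        thus "x \<in> X" unfolding X_def by blast
      qed
    qed
    have fX: "f ` X = \<Inter> (F ` S)"
    proof -
      have "f ` X = \<Inter> ((\<lambda>r. f ` G r) ` S)" unfolding X_def
        using image_INT[OF inj, of S G j] GA j by blast
      also have "\<dots> = \<Inter> (F ` S)"
      proof -
        have "(\<lambda>r. f ` G r) ` S = F ` S" using fG S by (auto intro: image_cong)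
        thus ?thesis by simp
      qed
      finally show ?thesis .
    qed
    have fXB: "f ` X \<subseteq> B" using XA fA by auto
    have fXflat: "pg_cl B R' (f ` X) = f ` X" using fcl XA Xflat by metis
    have c1: "int (card (Rsub R X)) = int (card X) - dim A R X" using flat_card[OF cA XA Xflat] .
    have c2: "int (card (Rsub R' (f ` X))) = int (card (f ` X)) - dim B R' (f ` X)"
      using flat_card[OF cB fXB fXflat] .
    have "card (f ` X) = card X" using card_image inj XA inj_on_subset by metis
    hence "int (card (Rsub R X)) = int (card (Rsub R' (f ` X)))" using c1 c2 trans[OF XA] by simp
    thus "card (Rsub R (\<Inter> (G ` S))) = card (Rsub R' (\<Inter> (F ` S)))" using fX unfolding X_def by simp
  qed
  define VA where "VA = pre V"
  have cardVA: "card VA = card V"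
  proof -
    have "f ` VA = V" unfolding VA_def using fpre[OF VB] .
    moreover have "inj_on f VA" using inj preA inj_on_subset unfolding VA_def by blast
    ultimately show ?thesis using card_image[of f VA] by simp
  qed
  have VAA: "VA \<subseteq> A" unfolding VA_def by (rule preA)
  have CVA: "C \<subseteq> VA" unfolding VA_def pre_def V_def using CA Y(1) unfolding C'_def by auto
  have GV: "\<And>r. r \<in> Q \<Longrightarrow> G r \<subseteq> VA"
  proof -
    fix r assume r: "r \<in> Q"
    have "f ` G r \<subseteq> V" using fG[OF r] r unfolding V_def by auto
    thus "G r \<subseteq> VA" unfolding VA_def pre_def using GA by auto
  qed
  have CnG: "C \<notin> (\<Union>r\<in>Q. Rsub R (G r))"
  proof
    assume "C \<in> (\<Union>r\<in>Q. Rsub R (G r))"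
    then obtain r where r: "r \<in> Q" "C \<subseteq> G r" unfolding Rsub_def by auto
    have "C' \<subseteq> F r" using r fG unfolding C'_def by blast
    hence "dim B R' C' \<le> dim B R' (F r)" by (rule dim_mono[OF finB _ FB])
    also have "\<dots> = dim B R' r" unfolding F_def by (rule dim_cl[OF cB]) (use QY[OF r(1)] Y(2) in auto)
    also have "\<dots> \<le> delta R' r" by (rule dim_le[OF finB order_refl]) (use QY[OF r(1)] Y(2) in auto)
    also have "\<dots> \<le> int (card r) - 1"
    proof -
      have "r \<in> Rsub R' r" using QY[OF r(1)] unfolding Rsub_def by auto
      hence "card (Rsub R' r) \<ge> 1"
        using finite_Rsub[OF finR'] by (metis One_nat_def Suc_leI card_gt_0_iff empty_iff)
      thus ?thesis unfolding delta_def by simp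
    qed
    also have "\<dots> \<le> int m - 1" using sz QY[OF r(1)] by auto
    finally show False using dC' assms(1) by simp
  qed
  have sub: "insert C (\<Union>r\<in>Q. Rsub R (G r)) \<subseteq> Rsub R VA"
    using CR CVA GV unfolding Rsub_def by blast
  have "card (insert C (\<Union>r\<in>Q. Rsub R (G r))) \<le> card (Rsub R VA)"
    using sub finite_Rsub[OF finR] card_mono by blast
  moreover have "card (insert C (\<Union>r\<in>Q. Rsub R (G r))) = card (\<Union>r\<in>Q. Rsub R (G r)) + 1"
    using CnG finite_subset[OF _ finite_Rsub[OF finR]] sub
    by (metis Suc_eq_plus1 card_insert_disjoint finite_insert)
  ultimately have A1: "card Q' + 1 \<le> card (Rsub R VA)" using cnt by simp
  have "dim A R C \<le> dim A R VA" using dim_mono[OF finA CVA VAA] .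
  moreover have "dim A R VA \<le> delta R VA" by (rule dim_le[OF finA order_refl VAA])
  ultimately have "int n - 1 \<le> int (card VA) - int (card (Rsub R VA))"
    using assms(6) unfolding delta_def by simp
  thus False using A1 keyB cardVA by linarith
qed

end
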